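(* Let $\delta\ge1$ be an integer. Under the AMC policy, for every characteristic function $v\in V_\delta$ and every arrival order $\pi$, the coalition structure $C_g$ formed by greedy players satisfies $|S|\le\delta$ for every $S\in C_g$.
   Context: Players: a finite set $N=\{a_1,\dots,a_n\}$. A characteristic function is $v:2^N\to\mathbb{R}_{\ge 0}$ with $v(\emptyset)=0$. There are fixed constants $0<\mathsf{min}\le\mathsf{max}$ and $v$ is monotone and bounded: $\mathsf{min}\le v(S)\le v(T)\le\mathsf{max}$ for all nonempty $S\subseteq T\subseteq N$. $V_\delta$ is the set of such $v$ with $\delta\cdot\mathsf{min}\le\mathsf{max}<(\delta+1)\cdot\mathsf{min}$. Online process: an arrival order is a permutation $\pi=(\pi_1,\dots,\pi_n)$ of $N$; player $\pi_t$ arrives at time $t$; $\pi_{\prec t}$ is the set of players arriving before time $t$ and $\pi^{-1}(i)$ the arrival time of $i$. For $S\subseteq N$, $\pi_{|S}$ denotes the players of $S$ in the relative order of $\pi$. Let $C^{t-1}$ be the coalition structure of players arrived before time $t$ ($C^0=\emptyset$). At time $t$, player $\pi_t$ either joins an existing coalition $S\in C^{t-1}$ or forms $\{\pi_t\}$ (choice $S=\emptyset$); decisions are never revised. AMC policy: for a coalition $S$ and $i\in S$, $\varphi_i(S,\pi_{|S})=v((\pi_{\prec\pi^{-1}(i)}\cap S)\cup\{i\})-v(\pi_{\prec\pi^{-1}(i)}\cap S)$. Greedy players: $\pi_t$ chooses $S\in C^{t-1}\cup\{\emptyset\}$ maximizing $\varphi_{\pi_t}(S\cup\{\pi_t\},\pi_{|S\cup\{\pi_t\}})$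 (predetermined tie-breaking); $C_g$ is the final structure after all $n$ arrivals. *)

theory Defs
  imports Complex_Main
begin

(* Arrival order: a list \<pi>, distinct, listing all players.
   pred_set \<pi> i = players arriving before i, i.e. pi_{<\<pi>^{-1}(i)}. *)
definition pred_set :: "'a list \<Rightarrow> 'a \<Rightarrow> 'a set" where
  "pred_set \<pi> i = set (takeWhile (\<lambda>x. x \<noteq> i) \<pi>)"

definition amc :: "('a set \<Rightarrow> real) \<Rightarrow> 'a list \<Rightarrow> 'a set \<Rightarrow> 'a \<Rightarrow> real" where
  "amc v \<pi> S i = v ((pred_set \<pi> i \<inter> S) \<union> {i}) - v (pred_set \<pi> i \<inter> S)"

(* greedy_run v \<pi> t C : C is a coalition structure C^t obtainable after the first t
   arrivals when each arriving player greedily chooses an option maximizing its AMC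
   payoff (any tie-breaking; S = {} means forming a singleton). *)
inductive greedy_run :: "('a set \<Rightarrow> real) \<Rightarrow> 'a list \<Rightarrow> nat \<Rightarrow> 'a set set \<Rightarrow> bool"
  for v :: "'a set \<Rightarrow> real" and \<pi> :: "'a list" where
  start: "greedy_run v \<pi> 0 {}"
| step: "\<lbrakk> greedy_run v \<pi> t C; t < length \<pi>;
          S \<in> insert {} C;
          \<forall>S' \<in> insert {} C. amc v \<pi> (S' \<union> {\<pi> ! t}) (\<pi> ! t) \<le> amc v \<pi> (S \<union> {\<pi> ! t}) (\<pi> ! t) \<rbrakk>
         \<Longrightarrow> greedy_run v \<pi> (Suc t) (insert (S \<union> {\<pi> ! t}) (C - {S}))"

end

theory Submission
  imports Defs
begin

lemma tw_app: "y \<notin> set xs \<Longrightarrow> takeWhile (\<lambda>x. x \<noteq> y) (xs @ y # rest) = xs"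
  by (induction xs) auto

lemma pred_set_nth:
  assumes "distinct \<pi>" "t < length \<pi>"
  shows "pred_set \<pi> (\<pi> ! t) = set (take t \<pi>)"
proof -
  have e: "\<pi> = take t \<pi> @ (\<pi> ! t) # drop (Suc t) \<pi>"
    using assms(2) by (simp add: id_take_nth_drop)
  have nin: "\<pi> ! t \<notin> set (take t \<pi>)"
    using assms by (metis e distinct_append distinct.simps(2) not_distinct_conv_prefix)
  have g: "\<And>y rest. y \<notin> set (take t \<pi>) \<Longrightarrow> takeWhile (\<lambda>x. x \<noteq> y) (take t \<pi> @ y # rest) = take t \<pi>"
    by (rule tw_app)
  have "takeWhile (\<lambda>x. x \<noteq> \<pi> ! t) \<pi> = take t \<pi>"
    using g[OF nin, of "drop (Suc t) \<pi>"] e by simp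
  then show ?thesis by (simp add: pred_set_def)
qed

lemma inv:
  assumes run: "greedy_run v \<pi> t C"
    and dist: "distinct \<pi>"
    and vb: "\<forall>S T. S \<noteq> {} \<and> S \<subseteq> T \<and> T \<subseteq> set \<pi> \<longrightarrow> vmin \<le> v S \<and> v S \<le> v T \<and> v T \<le> vmax"
    and v0: "v {} = 0"
  shows "t \<le> length \<pi> \<and> (\<forall>S\<in>C. S \<noteq> {} \<and> S \<subseteq> set (take t \<pi>) \<and> real (card S) * vmin \<le> v S)"
  using run
proof (induction rule: greedy_run.induct)
  case start
  then show ?case by simp
next
  case (step t C S)
  let ?x = "\<pi> ! t"
  have ps: "pred_set \<pi> ?x = set (take t \<pi>)" using pred_set_nth[OF dist step.hyps(2)] .
  have xnin: "?x \<notin> set (take t \<pi>)"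
    using dist step.hyps(2)
    by (metis id_take_nth_drop distinct_append distinct.simps(2) not_distinct_conv_prefix)
  have tk: "set (take (Suc t) \<pi>) = insert ?x (set (take t \<pi>))"
    using step.hyps(2) by (simp add: take_Suc_conv_app_nth)
  have xin: "?x \<in> set \<pi>" using step.hyps(2) by simp
  have tsub: "set (take t \<pi>) \<subseteq> set \<pi>" by (meson set_take_subset)
  have amcx: "amc v \<pi> ({} \<union> {?x}) ?x = v {?x}"
    using ps xnin v0 by (simp add: amc_def)
  have vx: "vmin \<le> v {?x}" using vb xin by blast
  have new: "S \<union> {?x} \<noteq> {} \<and> S \<union> {?x} \<subseteq> set (take (Suc t) \<pi>) \<and> real (card (S \<union> {?x})) * vmin \<le> v (S \<union> {?x})"
  proof (cases "S = {}")
    case True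
    then show ?thesis using vx tk by simp
  next
    case False
    then have SC: "S \<in> C" using step.hyps(3) by simp
    have Ssub: "S \<subseteq> set (take t \<pi>)" and Sv: "real (card S) * vmin \<le> v S"
      using step.IH SC by auto
    have fin: "finite S" using Ssub finite_subset by blast
    have xS: "?x \<notin> S" using Ssub xnin by blast
    have i1: "pred_set \<pi> ?x \<inter> (S \<union> {?x}) = S" using ps Ssub xnin by auto
    have amcS: "amc v \<pi> (S \<union> {?x}) ?x = v (S \<union> {?x}) - v S"
      unfolding amc_def i1 by simp
    have "amc v \<pi> ({} \<union> {?x}) ?x \<le> amc v \<pi> (S \<union> {?x}) ?x" using step.hyps(4) by blast
    then have "v {?x} \<le> v (S \<union> {?x}) - v S" using amcx amcS by simp
    then have "v S + vmin \<le> v (S \<union> {?x})" using vx by linarith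
    moreover have "card (S \<union> {?x}) = card S + 1" using fin xS by simp
    ultimately show ?thesis using Sv Ssub tk by (auto simp: algebra_simps)
  qed
  have old: "\<forall>T\<in>C - {S}. T \<noteq> {} \<and> T \<subseteq> set (take (Suc t) \<pi>) \<and> real (card T) * vmin \<le> v T"
    using step.IH tk by blast
  show ?case using new old step.hyps(2) by auto
qed

theorem lemma2:
  fixes N :: "'a set" and v :: "'a set \<Rightarrow> real" and vmin vmax :: real
    and \<delta> :: nat and \<pi> :: "'a list" and C :: "'a set set"
  assumes "finite N"
    and "0 < vmin" and "vmin \<le> vmax"
    and "v {} = 0"
    and "\<forall>S T. S \<noteq> {} \<and> S \<subseteq> T \<and> T \<subseteq> N \<longrightarrow> vmin \<le> v S \<and> v S \<le> v T \<and> v T \<le> vmax"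
    and "\<delta> \<ge> 1"
    and "real \<delta> * vmin \<le> vmax" and "vmax < (real \<delta> + 1) * vmin"
    and "distinct \<pi>" and "set \<pi> = N"
    and "greedy_run v \<pi> (length \<pi>) C"
  shows "\<forall>S \<in> C. card S \<le> \<delta>"
proof
  fix S assume SC: "S \<in> C"
  have I: "\<forall>S\<in>C. S \<noteq> {} \<and> S \<subseteq> set (take (length \<pi>) \<pi>) \<and> real (card S) * vmin \<le> v S"
    using inv[OF assms(11) assms(9), of vmin vmax] assms(4,5,10) by blast
  then have "S \<noteq> {}" "S \<subseteq> N" "real (card S) * vmin \<le> v S" using SC assms(10) by auto
  moreover have "v S \<le> vmax" using assms(5) calculation by blast
  ultimately have "real (card S) * vmin < (real \<delta> + 1) * vmin" using assms(8) by linarith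
  then have "real (card S) < real \<delta> + 1" using assms(2) by simp
  then show "card S \<le> \<delta>" by linarith
qed

end
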